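(* Let $N\ge1$, $1<p<\infty$, $m>p'$ and $\chi,M>0$. For every $s\in(0,N/p)$ let $\rho_s\in\mathcal Y_M$ minimize $\mathcal F_{s,p}$ over $\mathcal Y_M$, and let $$\mathcal D_s=\frac{p^*_s-m'}{M}\|\rho_s\|_m^m.$$ Then $$\limsup_{s\to0}\mathcal F_{s,p}(\rho_s)<0\qquad\text{and}\qquad\limsup_{s\to0}\mathcal D_s>0.$$
   Context: Riesz kernel. $K_{s/2}(x)=c_{N,s/2}|x|^{s-N}$, where $c_{N,s}=\pi^{-N/2}2^{-2s}\Gamma(N/2-s)/\Gamma(s)$. Exponents. $p'=p/(p-1)$, $m'=m/(m-1)$, and $p^*_s=Np/(N-sp)$. Admissible class. $\mathcal Y_M=\{\rho\in L^1_+\cap L^m(\mathbb R^N):\ \int\rho=M,\ \int x\rho=0\}$. Free energy. $\displaystyle\mathcal F_{s,p}(\rho)=\frac1{m-1}\int\rho^m-\frac{\chi}{p'}\int(K_{s/2}*\rho)^{p'}$. *)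

theory Defs
  imports "HOL-Analysis.Analysis"
begin

text \<open>Hoelder conjugate exponent q' = q/(q-1).\<close>
definition conj_exp :: "real \<Rightarrow> real" where
  "conj_exp q = q / (q - 1)"

text \<open>Fractional Sobolev exponent p^*_s = N p / (N - s p).\<close>
definition sobolev_exp :: "real \<Rightarrow> real \<Rightarrow> real \<Rightarrow> real" where
  "sobolev_exp N s p = N * p / (N - s * p)"

text \<open>c_{N,a} = pi^(-N/2) 2^(-2a) Gamma(N/2 - a) / Gamma(a).\<close>
definition riesz_const :: "real \<Rightarrow> real \<Rightarrow> real" where
  "riesz_const N a = pi powr (- N / 2) * 2 powr (- 2 * a) * Gamma (N / 2 - a) / Gamma a"

text \<open>K_a(x) = c_{N,a} |x|^(2a - N); the paper's K_{s/2} is riesz_kernel N (s/2).\<close>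
definition riesz_kernel :: "real \<Rightarrow> real \<Rightarrow> 'a::real_normed_vector \<Rightarrow> real" where
  "riesz_kernel N a x = riesz_const N a * norm x powr (2 * a - N)"

definition conv :: "('a::euclidean_space \<Rightarrow> real) \<Rightarrow> ('a \<Rightarrow> real) \<Rightarrow> 'a \<Rightarrow> real" where
  "conv K \<rho> x = (\<integral>y. K (x - y) * \<rho> y \<partial>lebesgue)"

text \<open>Admissible class Y_M (depends on m through L^m).\<close>
definition admissible :: "real \<Rightarrow> real \<Rightarrow> ('a::euclidean_space \<Rightarrow> real) set" where
  "admissible m M = {\<rho>. (\<forall>x. 0 \<le> \<rho> x) \<and> integrable lebesgue \<rho>
      \<and> integrable lebesgue (\<lambda>x. \<rho> x powr m)
      \<and> (\<integral>x. \<rho> x \<partial>lebesgue) = M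
      \<and> integrable lebesgue (\<lambda>x. \<rho> x *\<^sub>R x)
      \<and> (\<integral>x. \<rho> x *\<^sub>R x \<partial>lebesgue) = 0}"

text \<open>Free energy F_{s,p} with parameters m, chi.\<close>
definition free_energy :: "real \<Rightarrow> real \<Rightarrow> real \<Rightarrow> real \<Rightarrow> ('a::euclidean_space \<Rightarrow> real) \<Rightarrow> real" where
  "free_energy m chi s p \<rho> =
     1 / (m - 1) * (\<integral>x. \<rho> x powr m \<partial>lebesgue)
     - chi / conj_exp p *
       (\<integral>x. conv (riesz_kernel (real DIM('a)) (s / 2)) \<rho> x powr conj_exp p \<partial>lebesgue)"

end

theory Submission
  imports Defs
begin

lemma integrable_scaleR_iff':
  fixes f :: "'a \<Rightarrow> 'b::{banach, second_countable_topology}"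
  assumes "k \<noteq> 0"
  shows "integrable M (\<lambda>x. k *\<^sub>R f x) \<longleftrightarrow> integrable M f"
proof
  assume "integrable M (\<lambda>x. k *\<^sub>R f x)"
  then have "integrable M (\<lambda>x. (1/k) *\<^sub>R (k *\<^sub>R f x))" by (rule integrable_scaleR_right)
  then show "integrable M f" using assms by simp
qed (rule integrable_scaleR_right)

lemma lebesgue_scale_eq:
  assumes c: "c \<noteq> 0"
  shows "(lebesgue :: 'a::euclidean_space measure) =
    density (distr lebesgue lebesgue (\<lambda>x. c *\<^sub>R x)) (\<lambda>_. ennreal (\<bar>c\<bar> ^ DIM('a)))"
proof -
  have "(\<lambda>x::'a. 0 + (\<Sum>j\<in>Basis. (c * (x \<bullet> j)) *\<^sub>R j)) = (\<lambda>x. c *\<^sub>R x)"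
    unfolding scaleR_scaleR[symmetric] scaleR_sum_right[symmetric] euclidean_representation
    by simp
  then show ?thesis
    using lebesgue_affine_euclidean[where 'a='a, of "\<lambda>_. c" 0] c by (simp add: prod_constant)
qed

lemma lebesgue_scale_measurable:
  "(\<lambda>x::'a::euclidean_space. c *\<^sub>R x) \<in> lebesgue \<rightarrow>\<^sub>M lebesgue"
  by (rule lebesgue_measurable_scaling)

lemma lebesgue_scale_integral:
  fixes f :: "'a::euclidean_space \<Rightarrow> 'b::{banach, second_countable_topology}"
  assumes c: "c \<noteq> 0"
  shows "(\<integral>x. f x \<partial>lebesgue) = (\<bar>c\<bar> ^ DIM('a)) *\<^sub>R (\<integral>x. f (c *\<^sub>R x) \<partial>lebesgue)"
    and "integrable lebesgue (\<lambda>x. f (c *\<^sub>R x)) \<longleftrightarrow> integrable lebesgue f"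
proof -
  have T: "(\<lambda>x::'a. c *\<^sub>R x) \<in> lebesgue \<rightarrow>\<^sub>M lebesgue" by (rule lebesgue_measurable_scaling)
  have Ti: "(\<lambda>x::'a. (1/c) *\<^sub>R x) \<in> lebesgue \<rightarrow>\<^sub>M lebesgue" by (rule lebesgue_measurable_scaling)
  have "(\<integral>x. f x \<partial>lebesgue) = (\<bar>c\<bar> ^ DIM('a)) *\<^sub>R (\<integral>x. f (c *\<^sub>R x) \<partial>lebesgue)
     \<and> (integrable lebesgue (\<lambda>x. f (c *\<^sub>R x)) \<longleftrightarrow> integrable lebesgue f)"
  proof (cases "f \<in> borel_measurable lebesgue")
    case True
    have m2: "(\<lambda>x. f (c *\<^sub>R x)) \<in> borel_measurable lebesgue"
      using measurable_comp[OF T True] by (simp add: comp_def)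
    have I: "integrable lebesgue f \<longleftrightarrow> integrable (distr lebesgue lebesgue (\<lambda>x. c *\<^sub>R x)) f"
      apply (subst lebesgue_scale_eq[OF c, where 'a='a])
      apply (subst integrable_density)
      using True c by (auto simp: integrable_scaleR_iff')
    also have "\<dots> \<longleftrightarrow> integrable lebesgue (\<lambda>x. f (c *\<^sub>R x))"
      by (rule integrable_distr_eq[OF T True])
    finally have I': "integrable lebesgue (\<lambda>x. f (c *\<^sub>R x)) \<longleftrightarrow> integrable lebesgue f" by simp
    have "(\<integral>x. f x \<partial>lebesgue) = (\<integral>x. f x \<partial>density (distr lebesgue lebesgue (\<lambda>x. c *\<^sub>R x)) (\<lambda>_. ennreal (\<bar>c\<bar> ^ DIM('a))))"
      using lebesgue_scale_eq[OF c, where 'a='a] by simp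
    also have "\<dots> = (\<integral>x. (\<bar>c\<bar> ^ DIM('a)) *\<^sub>R f x \<partial>distr lebesgue lebesgue (\<lambda>x. c *\<^sub>R x))"
      by (subst integral_density) (use True in auto)
    also have "\<dots> = (\<bar>c\<bar> ^ DIM('a)) *\<^sub>R (\<integral>x. f x \<partial>distr lebesgue lebesgue (\<lambda>x. c *\<^sub>R x))"
      by simp
    also have "(\<integral>x. f x \<partial>distr lebesgue lebesgue (\<lambda>x. c *\<^sub>R x)) = (\<integral>x. f (c *\<^sub>R x) \<partial>lebesgue)"
      by (rule integral_distr[OF T True])
    finally show ?thesis using I' by simp
  next
    case False
    have "(\<lambda>x. f (c *\<^sub>R x)) \<notin> borel_measurable lebesgue"
    proof
      assume "(\<lambda>x. f (c *\<^sub>R x)) \<in> borel_measurable lebesgue"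
      from measurable_comp[OF Ti this] have "(\<lambda>x. f (c *\<^sub>R ((1/c) *\<^sub>R x))) \<in> borel_measurable lebesgue"
        by (simp add: comp_def)
      with c False show False by simp
    qed
    with False have "\<not> integrable lebesgue f" "\<not> integrable lebesgue (\<lambda>x. f (c *\<^sub>R x))"
      by (auto dest: borel_measurable_integrable)
    then show ?thesis by (simp add: not_integrable_integral_eq)
  qed
  then show "(\<integral>x. f x \<partial>lebesgue) = (\<bar>c\<bar> ^ DIM('a)) *\<^sub>R (\<integral>x. f (c *\<^sub>R x) \<partial>lebesgue)"
    and "integrable lebesgue (\<lambda>x. f (c *\<^sub>R x)) \<longleftrightarrow> integrable lebesgue f" by auto
qed

lemma lborel_scale_nn:
  fixes g :: "'a::euclidean_space \<Rightarrow> ennreal"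
  assumes [measurable]: "g \<in> borel_measurable borel" and c: "c \<noteq> 0"
  shows "(\<integral>\<^sup>+x. g x \<partial>lborel) = ennreal (\<bar>c\<bar> ^ DIM('a)) * (\<integral>\<^sup>+x. g (c *\<^sub>R x) \<partial>lborel)"
  by (subst lborel_affine[OF c, of 0])
     (simp add: nn_integral_density nn_integral_distr nn_integral_cmult)

lemma lborel_reflect_nn:
  fixes g :: "'a::euclidean_space \<Rightarrow> ennreal"
  assumes [measurable]: "g \<in> borel_measurable borel"
  shows "(\<integral>\<^sup>+y. g y \<partial>lborel) = (\<integral>\<^sup>+z. g (x - z) \<partial>lborel)"
  by (subst lborel_affine[of "-1" x])
     (simp_all add: nn_integral_density nn_integral_distr)

definition ann :: "real \<Rightarrow> 'a::euclidean_space set" where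
  "ann t = {z. t \<le> norm z \<and> norm z < 2 * t}"

lemma ann_borel[measurable]: "ann t \<in> sets borel"
proof -
  have "ann t = {z. t \<le> norm z} \<inter> {z. norm z < 2*t}" by (auto simp: ann_def)
  also have "\<dots> \<in> sets borel" by measurable
  finally show ?thesis .
qed

definition Pann :: "real \<Rightarrow> 'a::euclidean_space itself \<Rightarrow> ennreal" where
  "Pann f _ = (\<integral>\<^sup>+z. indicator (ann 1 :: 'a set) z * ennreal (norm z powr f) \<partial>lborel)"

lemma ann_scale:
  fixes f :: real
  assumes t: "t > 0"
  shows "(\<integral>\<^sup>+z. indicator (ann t :: 'a::euclidean_space set) z * ennreal (norm z powr f) \<partial>lborel)
     = ennreal (t powr (real DIM('a) + f)) * Pann f TYPE('a)"
proof -
  have "(\<integral>\<^sup>+z. indicator (ann t :: 'a set) z * ennreal (norm z powr f) \<partial>lborel)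
     = ennreal (t ^ DIM('a)) * (\<integral>\<^sup>+z. indicator (ann t :: 'a set) (t *\<^sub>R z) * ennreal (norm (t *\<^sub>R z) powr f) \<partial>lborel)"
    using t by (subst lborel_scale_nn[of _ t]) auto
  also have "(\<lambda>z. indicator (ann t :: 'a set) (t *\<^sub>R z) * ennreal (norm (t *\<^sub>R z) powr f))
     = (\<lambda>z. ennreal (t powr f) * (indicator (ann 1) z * ennreal (norm z powr f)))"
  proof
    fix z :: 'a
    have "t *\<^sub>R z \<in> ann t \<longleftrightarrow> z \<in> ann 1" using t by (auto simp: ann_def)
    moreover have "norm (t *\<^sub>R z) powr f = t powr f * norm z powr f"
      using t by (simp add: powr_mult)
    ultimately show "indicator (ann t :: 'a set) (t *\<^sub>R z) * ennreal (norm (t *\<^sub>R z) powr f)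
       = ennreal (t powr f) * (indicator (ann 1) z * ennreal (norm z powr f))"
      by (auto simp: indicator_def ennreal_mult)
  qed
  also have "(\<integral>\<^sup>+z. ennreal (t powr f) * (indicator (ann 1 :: 'a set) z * ennreal (norm z powr f)) \<partial>lborel)
      = ennreal (t powr f) * Pann f TYPE('a)"
    unfolding Pann_def by (subst nn_integral_cmult) auto
  also have "ennreal (t ^ DIM('a)) * (ennreal (t powr f) * Pann f TYPE('a))
     = ennreal (t powr (real DIM('a) + f)) * Pann f TYPE('a)"
  proof -
    have "t powr (real DIM('a) + f) = t ^ DIM('a) * t powr f" using t by (simp add: powr_add powr_realpow)
    then show ?thesis using t by (simp add: ennreal_mult mult.assoc)
  qed
  finally show ?thesis .
qed

lemma emeasure_ann1: "emeasure lborel (ann 1 :: 'a::euclidean_space set)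
   = ennreal (unit_ball_vol DIM('a) * (2 ^ DIM('a) - 1))"
proof -
  have "ann 1 = ball (0::'a) 2 - ball 0 1" by (auto simp: ann_def)
  then have "emeasure lborel (ann 1 :: 'a set) = emeasure lborel (ball (0::'a) 2) - emeasure lborel (ball (0::'a) 1)"
    apply (simp only:)
    apply (rule emeasure_Diff)
    using emeasure_lborel_ball_finite[of "0::'a" 2] emeasure_lborel_ball_finite[of "0::'a" 1] by (auto simp: subset_eq)
  also have "\<dots> = ennreal (unit_ball_vol DIM('a) * 2 ^ DIM('a)) - ennreal (unit_ball_vol DIM('a))"
    by (simp add: emeasure_ball)
  also have "\<dots> = ennreal (unit_ball_vol DIM('a) * (2 ^ DIM('a) - 1))"
    by (subst ennreal_minus) (auto simp: algebra_simps)
  finally show ?thesis .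
qed

definition vA :: "'a::euclidean_space itself \<Rightarrow> real" where
  "vA _ = unit_ball_vol DIM('a) * (2 ^ DIM('a) - 1)"

lemma vA_pos: "vA TYPE('a::euclidean_space) > 0"
proof -
  have "(1::real) < 2 ^ DIM('a)" by (rule one_less_power) auto
  then show ?thesis unfolding vA_def by simp
qed

lemma Pann_bounds:
  assumes "f \<le> 0"
  shows "Pann f TYPE('a::euclidean_space) \<le> ennreal (vA TYPE('a))"
    and "ennreal (2 powr f * vA TYPE('a)) \<le> Pann f TYPE('a)"
proof -
  have "Pann f TYPE('a) \<le> (\<integral>\<^sup>+z. indicator (ann 1 :: 'a set) z \<partial>lborel)"
    unfolding Pann_def
  proof (intro nn_integral_mono)
    fix z :: 'a
    show "indicator (ann 1) z * ennreal (norm z powr f) \<le> indicator (ann 1) z"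
    proof (cases "z \<in> ann 1")
      case True
      then have "1 \<le> norm z" by (auto simp: ann_def)
      then have "norm z powr f \<le> norm z powr 0" using assms by (intro powr_mono) simp_all
      then have "norm z powr f \<le> 1" using \<open>1 \<le> norm z\<close> by (cases "z = 0") auto
      then show ?thesis using True by (simp add: ennreal_le_1)
    qed simp
  qed
  also have "\<dots> = ennreal (vA TYPE('a))" by (simp add: emeasure_ann1 vA_def)
  finally show "Pann f TYPE('a::euclidean_space) \<le> ennreal (vA TYPE('a))" .
  have "ennreal (2 powr f * vA TYPE('a)) = (\<integral>\<^sup>+z. ennreal (2 powr f) * indicator (ann 1 :: 'a set) z \<partial>lborel)"
    by (subst nn_integral_cmult) (auto simp: emeasure_ann1 vA_def ennreal_mult)
  also have "\<dots> \<le> Pann f TYPE('a)"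
    unfolding Pann_def
  proof (intro nn_integral_mono)
    fix z :: 'a
    show "ennreal (2 powr f) * indicator (ann 1) z \<le> indicator (ann 1) z * ennreal (norm z powr f)"
    proof (cases "z \<in> ann 1")
      case True
      then have "0 < norm z" "norm z \<le> 2" by (auto simp: ann_def)
      then have "2 powr f \<le> norm z powr f" using assms by (intro powr_mono2') auto
      then show ?thesis using True by (simp add: ennreal_leI)
    qed simp
  qed
  finally show "ennreal (2 powr f * vA TYPE('a)) \<le> Pann f TYPE('a)" .
qed

lemma ball_pointwise:
  fixes z :: "'a::euclidean_space"
  assumes r: "r > 0"
  shows "indicator (ball 0 r) z * ennreal (norm z powr f)
     = (\<Sum>k. indicator (ann (r / 2^(k+1))) z * ennreal (norm z powr f))"
proof (cases "z = 0 \<or> r \<le> norm z")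
  case True
  then have "\<forall>k. indicator (ann (r / 2^(k+1))) z * ennreal (norm z powr f) = 0"
  proof
    assume "z = 0" then show ?thesis by simp
  next
    assume h: "r \<le> norm z"
    show ?thesis
    proof
      fix k :: nat
      have "r / 2^(k+1) * 2 \<le> r" using r by (simp add: field_simps)
      then have "z \<notin> ann (r / 2^(k+1))" using h by (auto simp: ann_def)
      then show "indicator (ann (r / 2^(k+1))) z * ennreal (norm z powr f) = 0" by simp
    qed
  qed
  then show ?thesis using True by auto
next
  case False
  then have z: "0 < norm z" "norm z < r" by auto
  obtain n0 where n0: "r / norm z < 2 ^ n0" using real_arch_pow[of 2 "r / norm z"] by auto
  define n where "n = (LEAST n::nat. r / norm z \<le> 2 ^ n)"
  have n1: "r / norm z \<le> 2 ^ n" unfolding n_def by (rule LeastI[of _ n0]) (use n0 in simp)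
  have n2: "\<not> r / norm z \<le> 2 ^ k" if "k < n" for k using not_less_Least[OF that[unfolded n_def]] .
  have "n \<noteq> 0" using n1 z by (cases "n = 0") (auto simp: field_simps)
  then obtain k0 where k0: "n = Suc k0" by (cases n) auto
  have A: "r / 2^(k0+1) \<le> norm z" "norm z < r / 2^k0"
  proof -
    have "r / norm z \<le> 2 ^ (k0+1)" using n1 k0 by simp
    then show "r / 2^(k0+1) \<le> norm z" using z by (simp add: field_simps)
    have "\<not> r / norm z \<le> 2 ^ k0" using n2[of k0] k0 by simp
    then show "norm z < r / 2^k0" using z by (simp add: field_simps)
  qed
  have in0: "z \<in> ann (r / 2^(k0+1))" using A by (auto simp: ann_def field_simps)
  have notk: "z \<notin> ann (r / 2^(k+1))" if "k \<noteq> k0" for k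
  proof (cases "k < k0")
    case True
    then have "(2::real)^(k+1) \<le> 2^k0" by (intro power_increasing) auto
    then have "r / 2^k0 \<le> r / 2^(k+1)" using r by (intro divide_left_mono) auto
    then show ?thesis using A by (auto simp: ann_def)
  next
    case False
    with that have "k0 + 1 \<le> k" by auto
    then have "(2::real)^(k0+1) \<le> 2^k" by (intro power_increasing) auto
    then have "r / 2^k \<le> r / 2^(k0+1)" using r by (intro divide_left_mono) auto
    moreover have "2 * (r / 2 ^ (k + 1)) = r / 2^k" by (simp add: field_simps)
    ultimately show ?thesis using A by (auto simp: ann_def)
  qed
  have "(\<Sum>k. indicator (ann (r / 2^(k+1))) z * ennreal (norm z powr f))
     = (\<Sum>k\<in>{k0}. indicator (ann (r / 2^(k+1))) z * ennreal (norm z powr f))"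
    by (rule suminf_finite) (use notk in auto)
  also have "\<dots> = ennreal (norm z powr f)" using in0 by simp
  finally show ?thesis using z by simp
qed

lemma ext_pointwise:
  fixes z :: "'a::euclidean_space"
  assumes r: "r > 0"
  shows "indicator {z. r \<le> norm z} z * ennreal (norm z powr f)
     = (\<Sum>k. indicator (ann (r * 2^k)) z * ennreal (norm z powr f))"
proof (cases "r \<le> norm z")
  case False
  then have "\<forall>k. indicator (ann (r * 2^k)) z * ennreal (norm z powr f) = 0"
  proof (intro allI)
    fix k :: nat
    have "r \<le> r * 2^k" using r by simp
    then have "z \<notin> ann (r * 2^k)" using False by (auto simp: ann_def)
    then show "indicator (ann (r * 2^k)) z * ennreal (norm z powr f) = 0" by simp
  qed
  then show ?thesis using False by auto
next
  case True
  then have z: "0 < norm z" "r \<le> norm z" using r by auto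
  obtain n0 where n0: "norm z / r < 2 ^ n0" using real_arch_pow[of 2 "norm z / r"] by auto
  define n where "n = (LEAST n::nat. norm z / r < 2 ^ n)"
  have n1: "norm z / r < 2 ^ n" unfolding n_def by (rule LeastI[of _ n0]) (rule n0)
  have n2: "\<not> norm z / r < 2 ^ k" if "k < n" for k using not_less_Least[OF that[unfolded n_def]] .
  have "n \<noteq> 0" using n1 z r by (cases "n = 0") (auto simp: field_simps)
  then obtain k0 where k0: "n = Suc k0" by (cases n) auto
  have A: "r * 2^k0 \<le> norm z" "norm z < r * 2^(k0+1)"
  proof -
    have "norm z / r < 2 ^ (k0+1)" using n1 k0 by simp
    then show "norm z < r * 2^(k0+1)" using r by (simp add: field_simps)
    have "\<not> norm z / r < 2 ^ k0" using n2[of k0] k0 by simp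
    then show "r * 2^k0 \<le> norm z" using r by (simp add: field_simps)
  qed
  have in0: "z \<in> ann (r * 2^k0)" using A by (auto simp: ann_def field_simps)
  have notk: "z \<notin> ann (r * 2^k)" if "k \<noteq> k0" for k
  proof (cases "k < k0")
    case True
    then have "(2::real)^(k+1) \<le> 2^k0" by (intro power_increasing) auto
    then have "2 * (r * 2^k) \<le> r * 2^k0" using r by simp
    then show ?thesis using A by (auto simp: ann_def)
  next
    case False
    with that have "k0 + 1 \<le> k" by auto
    then have "(2::real)^(k0+1) \<le> 2^k" by (intro power_increasing) auto
    then have "r * 2^(k0+1) \<le> r * 2^k" using r by simp
    then show ?thesis using A by (auto simp: ann_def)
  qed
  have "(\<Sum>k. indicator (ann (r * 2^k)) z * ennreal (norm z powr f))
     = (\<Sum>k\<in>{k0}. indicator (ann (r * 2^k)) z * ennreal (norm z powr f))"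
    by (rule suminf_finite) (use notk in auto)
  also have "\<dots> = ennreal (norm z powr f)" using in0 by simp
  finally show ?thesis using z by simp
qed

lemma pow2_powr: "((2::real)^k) powr a = (2 powr a)^k"
proof -
  have "((2::real)^k) powr a = (2 powr real k) powr a" by (simp add: powr_realpow)
  also have "\<dots> = 2 powr (a * real k)" by (simp add: powr_powr mult.commute)
  also have "\<dots> = (2 powr a) powr real k" by (simp add: powr_powr)
  also have "\<dots> = (2 powr a)^k" by (simp add: powr_realpow)
  finally show ?thesis .
qed

lemma ball_integral:
  fixes f :: real
  assumes r: "r > 0" and a: "DIM('a) + f > 0"
  shows "(\<integral>\<^sup>+z. indicator (ball 0 r :: 'a::euclidean_space set) z * ennreal (norm z powr f) \<partial>lborel)
     = Pann f TYPE('a) * ennreal (r powr (DIM('a) + f) / (2 powr (DIM('a) + f) - 1))"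
proof -
  define a where "a = DIM('a) + f"
  define x where "x = 1 / 2 powr a"
  have "2 powr 0 < 2 powr a" using a unfolding a_def by (intro powr_less_mono) auto
  then have x: "0 < x" "x < 1" unfolding x_def by auto
  have trm: "(r / 2^(k+1)) powr a = r powr a * x * x ^ k" for k :: nat
  proof -
    have "(r / 2^(k+1)) powr a = r powr a / (2^(k+1)) powr a"
      using r by (intro powr_divide)
    also have "\<dots> = r powr a / (2 powr a)^(k+1)" by (simp only: pow2_powr)
    also have "\<dots> = r powr a * x^(k+1)" unfolding x_def by (simp add: power_one_over)
    finally show ?thesis by simp
  qed
  have sums: "(\<lambda>k. (r / 2^(k+1)) powr a) sums (r powr a * x * (1 / (1 - x)))"
    unfolding trm by (intro sums_mult geometric_sums) (use x in auto)
  have val: "r powr a * x * (1 / (1 - x)) = r powr a / (2 powr a - 1)"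
    using x unfolding x_def by (simp add: field_simps)
  have S: "(\<Sum>k. ennreal ((r / 2^(k+1)) powr a)) = ennreal (r powr a / (2 powr a - 1))"
  proof -
    have "(\<Sum>k. ennreal ((r / 2^(k+1)) powr a)) = ennreal (r powr a * x * (1 / (1 - x)))"
      by (rule suminf_ennreal_eq[OF _ sums]) simp
    then show ?thesis by (simp only: val)
  qed
  have "(\<integral>\<^sup>+z. indicator (ball 0 r :: 'a set) z * ennreal (norm z powr f) \<partial>lborel)
     = (\<integral>\<^sup>+z. (\<Sum>k. indicator (ann (r / 2^(k+1)) :: 'a set) z * ennreal (norm z powr f)) \<partial>lborel)"
    by (simp add: ball_pointwise[OF r])
  also have "\<dots> = (\<Sum>k. (\<integral>\<^sup>+z. indicator (ann (r / 2^(k+1)) :: 'a set) z * ennreal (norm z powr f) \<partial>lborel))"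
    by (rule nn_integral_suminf) measurable
  also have "\<dots> = (\<Sum>k. Pann f TYPE('a) * ennreal ((r / 2^(k+1)) powr a))"
  proof (rule suminf_cong)
    fix k :: nat
    have "r / 2^(k+1) > 0" using r by simp
    from ann_scale[OF this, where 'a='a, of f] show "(\<integral>\<^sup>+z. indicator (ann (r / 2^(k+1)) :: 'a set) z * ennreal (norm z powr f) \<partial>lborel) = Pann f TYPE('a) * ennreal ((r / 2^(k+1)) powr a)"
      unfolding a_def by (simp add: ac_simps)
  qed
  also have "\<dots> = Pann f TYPE('a) * ennreal (r powr a / (2 powr a - 1))"
    by (simp only: ennreal_suminf_cmult S)
  finally show ?thesis by (simp only: a_def)
qed

lemma ext_integral:
  fixes f :: real
  assumes r: "r > 0" and a: "DIM('a) + f < 0"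
  shows "(\<integral>\<^sup>+z. indicator {z::'a::euclidean_space. r \<le> norm z} z * ennreal (norm z powr f) \<partial>lborel)
     = Pann f TYPE('a) * ennreal (r powr (DIM('a) + f) / (1 - 2 powr (DIM('a) + f)))"
proof -
  define a where "a = DIM('a) + f"
  define x where "x = 2 powr a"
  have "2 powr a < 2 powr 0" using a unfolding a_def by (intro powr_less_mono) auto
  then have x: "0 < x" "x < 1" unfolding x_def by auto
  have trm: "(r * 2^k) powr a = r powr a * x ^ k" for k :: nat
  proof -
    have "(r * 2^k) powr a = r powr a * (2^k) powr a"
      using r by (intro powr_mult)
    also have "\<dots> = r powr a * x^k" unfolding x_def by (simp only: pow2_powr)
    finally show ?thesis .
  qed
  have sums: "(\<lambda>k. (r * 2^k) powr a) sums (r powr a * (1 / (1 - x)))"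
    unfolding trm by (intro sums_mult geometric_sums) (use x in auto)
  have S: "(\<Sum>k. ennreal ((r * 2^k) powr a)) = ennreal (r powr a / (1 - x))"
  proof -
    have "(\<Sum>k. ennreal ((r * 2^k) powr a)) = ennreal (r powr a * (1 / (1 - x)))"
      by (rule suminf_ennreal_eq[OF _ sums]) simp
    then show ?thesis by simp
  qed
  have "(\<integral>\<^sup>+z. indicator {z::'a. r \<le> norm z} z * ennreal (norm z powr f) \<partial>lborel)
     = (\<integral>\<^sup>+z. (\<Sum>k. indicator (ann (r * 2^k) :: 'a set) z * ennreal (norm z powr f)) \<partial>lborel)"
    by (simp add: ext_pointwise[OF r])
  also have "\<dots> = (\<Sum>k. (\<integral>\<^sup>+z. indicator (ann (r * 2^k) :: 'a set) z * ennreal (norm z powr f) \<partial>lborel))"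
    by (rule nn_integral_suminf) measurable
  also have "\<dots> = (\<Sum>k. Pann f TYPE('a) * ennreal ((r * 2^k) powr a))"
  proof (rule suminf_cong)
    fix k :: nat
    have "r * 2^k > 0" using r by simp
    from ann_scale[OF this, where 'a='a, of f] show "(\<integral>\<^sup>+z. indicator (ann (r * 2^k) :: 'a set) z * ennreal (norm z powr f) \<partial>lborel) = Pann f TYPE('a) * ennreal ((r * 2^k) powr a)"
      unfolding a_def by (simp add: ac_simps)
  qed
  also have "\<dots> = Pann f TYPE('a) * ennreal (r powr a / (1 - x))"
    by (simp only: ennreal_suminf_cmult S)
  finally show ?thesis unfolding a_def x_def .
qed

definition Jb :: "real \<Rightarrow> real \<Rightarrow> 'a::euclidean_space itself \<Rightarrow> ennreal" where
  "Jb e r _ = (\<integral>\<^sup>+z. indicator (ball 0 r :: 'a set) z * ennreal (norm z powr e) \<partial>lborel)"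

definition Phi :: "real \<Rightarrow> real \<Rightarrow> 'a::euclidean_space \<Rightarrow> ennreal" where
  "Phi R e x = (\<integral>\<^sup>+y. ennreal (norm (x - y) powr e * indicator (ball 0 R) y) \<partial>lborel)"

lemma Phi_refl:
  fixes x :: "'a::euclidean_space"
  shows "Phi R e x = (\<integral>\<^sup>+z. ennreal (norm z powr e * indicator (ball 0 R) (x - z)) \<partial>lborel)"
proof -
  have [measurable]: "ball (0::'a) R \<in> sets borel" by simp
  show ?thesis unfolding Phi_def
    by (subst lborel_reflect_nn[of _ x]) auto
qed

lemma Phi_upper:
  fixes x :: "'a::euclidean_space"
  shows "Phi R e x \<le> Jb e (norm x + R) TYPE('a)"
  unfolding Phi_refl Jb_def
proof (intro nn_integral_mono)
  fix z :: 'a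
  show "ennreal (norm z powr e * indicator (ball 0 R) (x - z))
      \<le> indicator (ball 0 (norm x + R)) z * ennreal (norm z powr e)"
  proof (cases "x - z \<in> ball 0 R")
    case True
    then have "norm z < norm x + R"
      using norm_triangle_ineq4[of x z] norm_minus_commute[of x z]
      by (auto simp: dist_norm) (smt (verit, best) norm_minus_commute norm_triangle_ineq2)
    then show ?thesis using True by (simp add: dist_norm)
  qed simp
qed

lemma Phi_lower:
  fixes x :: "'a::euclidean_space"
  assumes "norm x \<le> R / 2"
  shows "Jb e (R/2) TYPE('a) \<le> Phi R e x"
  unfolding Phi_refl Jb_def
proof (intro nn_integral_mono)
  fix z :: 'a
  show "indicator (ball 0 (R/2)) z * ennreal (norm z powr e)
      \<le> ennreal (norm z powr e * indicator (ball 0 R) (x - z))"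
  proof (cases "z \<in> ball 0 (R/2)")
    case True
    then have "norm (x - z) < R"
      using norm_triangle_ineq4[of x z] assms by (auto simp: dist_norm)
    then have "x - z \<in> ball 0 R" by (simp add: dist_norm norm_minus_commute)
    then show ?thesis using True by simp
  qed simp
qed

lemma Phi_far:
  fixes x :: "'a::euclidean_space"
  assumes e: "e \<le> 0" and R: "R > 0" and x: "2 * R \<le> norm x"
  shows "Phi R e x \<le> ennreal ((norm x / 2) powr e * (unit_ball_vol DIM('a) * R ^ DIM('a)))"
proof -
  have "Phi R e x \<le> (\<integral>\<^sup>+y. ennreal ((norm x / 2) powr e) * indicator (ball 0 R :: 'a set) y \<partial>lborel)"
    unfolding Phi_def
  proof (intro nn_integral_mono)
    fix y :: 'a
    show "ennreal (norm (x - y) powr e * indicator (ball 0 R) y)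
        \<le> ennreal ((norm x / 2) powr e) * indicator (ball 0 R) y"
    proof (cases "y \<in> ball 0 R")
      case True
      then have "norm y < R" by (simp add: dist_norm)
      then have "norm x / 2 \<le> norm (x - y)"
        using norm_triangle_ineq2[of x y] x by linarith
      moreover have "0 < norm x / 2" using x R by linarith
      ultimately have "norm (x - y) powr e \<le> (norm x / 2) powr e"
        using e by (intro powr_mono2') auto
      then show ?thesis using True by (simp add: ennreal_leI)
    qed simp
  qed
  also have "\<dots> = ennreal ((norm x / 2) powr e) * emeasure lborel (ball 0 R :: 'a set)"
    by (subst nn_integral_cmult_indicator) auto
  also have "\<dots> = ennreal ((norm x / 2) powr e * (unit_ball_vol DIM('a) * R ^ DIM('a)))"
    using R by (simp add: emeasure_ball ennreal_mult)
  finally show ?thesis .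
qed

lemma Jb_eq:
  fixes e :: real
  assumes r: "r > 0" and s: "real DIM('a) + e > 0"
  shows "Jb e r TYPE('a::euclidean_space) = Pann e TYPE('a) * ennreal (r powr (real DIM('a) + e) / (2 powr (real DIM('a) + e) - 1))"
  unfolding Jb_def using ball_integral[OF r s] by simp

lemma Jb_finite:
  fixes e :: real
  assumes r: "r > 0" and s: "real DIM('a) + e > 0" and e: "e \<le> 0"
  shows "Jb e r TYPE('a::euclidean_space) < \<infinity>"
proof -
  have "Pann e TYPE('a) < \<infinity>" using Pann_bounds(1)[OF e, where 'a='a] by (simp add: le_less_trans)
  then show ?thesis using Jb_eq[OF r s] by (simp add: ennreal_mult_less_top)
qed

lemma Jb_lower:
  fixes e :: real
  assumes r: "r > 0" and s: "real DIM('a) + e > 0" and e: "e \<le> 0"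
  shows "ennreal (2 powr e * vA TYPE('a) * (r powr (real DIM('a) + e) / (2 powr (real DIM('a) + e) - 1)))
      \<le> Jb e r TYPE('a::euclidean_space)"
proof -
  have pos: "0 \<le> r powr (real DIM('a) + e) / (2 powr (real DIM('a) + e) - 1)"
  proof -
    have "2 powr 0 < 2 powr (real DIM('a) + e)" using s by (intro powr_less_mono) auto
    then show ?thesis by simp
  qed
  have "ennreal (2 powr e * vA TYPE('a) * (r powr (real DIM('a) + e) / (2 powr (real DIM('a) + e) - 1)))
     = ennreal (2 powr e * vA TYPE('a)) * ennreal (r powr (real DIM('a) + e) / (2 powr (real DIM('a) + e) - 1))"
    by (rule ennreal_mult[OF _ pos]) (use vA_pos[where 'a='a] in simp)
  also have "\<dots> \<le> Pann e TYPE('a) * ennreal (r powr (real DIM('a) + e) / (2 powr (real DIM('a) + e) - 1))"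
    using Pann_bounds(2)[OF e, where 'a='a] by (intro mult_right_mono) auto
  finally show ?thesis using Jb_eq[OF r s] by simp
qed

lemma ball_borel_sets[measurable]: "ball (c::'a::euclidean_space) r \<in> sets borel" by simp

lemma conv_sigma_eq:
  fixes x :: "'a::euclidean_space"
  shows "conv (riesz_kernel (real DIM('a)) (s/2)) (\<lambda>y::'a. h * indicator (ball 0 R) y) x
    = riesz_const (real DIM('a)) (s/2) * h * enn2real (Phi R (s - real DIM('a)) x)"
proof -
  have "conv (riesz_kernel (real DIM('a)) (s/2)) (\<lambda>y::'a. h * indicator (ball 0 R) y) x
     = (\<integral>y. (riesz_const (real DIM('a)) (s/2) * h) * (norm (x - y) powr (s - real DIM('a)) * indicator (ball 0 R) y) \<partial>lebesgue)"
    unfolding conv_def riesz_kernel_def by (simp add: ac_simps)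
  also have "\<dots> = (riesz_const (real DIM('a)) (s/2) * h) * (\<integral>y. norm (x - y) powr (s - real DIM('a)) * indicator (ball 0 R) y \<partial>lebesgue)"
    by (rule integral_mult_right_zero)
  also have "(\<integral>y. norm (x - y) powr (s - real DIM('a)) * indicator (ball 0 R) y \<partial>lebesgue)
     = (\<integral>y. norm (x - y) powr (s - real DIM('a)) * indicator (ball 0 R) y \<partial>lborel)"
    by (rule integral_completion) measurable
  also have "\<dots> = enn2real (Phi R (s - real DIM('a)) x)"
    unfolding Phi_def by (rule integral_eq_nn_integral) auto
  finally show ?thesis by simp
qed

lemma Phi_measurable[measurable]:
  "(\<lambda>x::'a::euclidean_space. Phi R e x) \<in> borel_measurable lborel"
  unfolding Phi_def
  by (rule lborel.borel_measurable_nn_integral) measurable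

lemma Jb_mono:
  assumes "r1 \<le> r2"
  shows "Jb e r1 TYPE('a::euclidean_space) \<le> Jb e r2 TYPE('a)"
  unfolding Jb_def
proof (intro nn_integral_mono)
  fix z :: 'a
  show "indicator (ball 0 r1) z * ennreal (norm z powr e) \<le> indicator (ball 0 r2) z * ennreal (norm z powr e)"
    using assms by (cases "z \<in> ball 0 r1") (auto simp: dist_norm)
qed

lemma powr_far_bound:
  fixes y K e q :: real
  assumes "0 < y" "0 \<le> K" "0 \<le> q"
  shows "(K * (y / 2) powr e) powr q = K powr q * 2 powr (- (e * q)) * y powr (e * q)"
proof -
  have "(K * (y / 2) powr e) powr q = K powr q * ((y / 2) powr e) powr q"
    using assms by (simp add: powr_mult)
  also have "((y / 2) powr e) powr q = (y / 2) powr (e * q)" by (simp add: powr_powr)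
  also have "\<dots> = y powr (e * q) / 2 powr (e * q)" using assms by (simp add: powr_divide)
  also have "\<dots> = 2 powr (- (e * q)) * y powr (e * q)" by (simp add: powr_minus_divide)
  finally show ?thesis by simp
qed

lemma sigma_potential:
  fixes s R h q :: real
  assumes s: "0 < s" "s < real DIM('a)" and qN: "(real DIM('a) - s) * q > real DIM('a)"
    and q: "q > 1" and h: "h > 0" and R: "R > 0" and c: "riesz_const (real DIM('a)) (s/2) > 0"
  defines "u \<equiv> (\<lambda>x. conv (riesz_kernel (real DIM('a)) (s/2)) (\<lambda>y::'a::euclidean_space. h * indicator (ball 0 R) y) x)"
  shows "integrable lebesgue (\<lambda>x. u x powr q)"
    and "(riesz_const (real DIM('a)) (s/2) * h * (2 powr (s - real DIM('a)) * vA TYPE('a) * ((R/2) powr s / (2 powr s - 1)))) powr q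
           * (unit_ball_vol DIM('a) * (R/2) ^ DIM('a)) \<le> (\<integral>x. u x powr q \<partial>lebesgue)"
proof -
  define N where "N = real DIM('a)"
  define e where "e = s - N"
  define cc where "cc = riesz_const N (s/2)"
  have cc: "cc > 0" using c unfolding cc_def N_def .
  have e0: "e \<le> 0" using s unfolding e_def N_def by simp
  have Ne: "real DIM('a) + e > 0" using s unfolding e_def N_def by simp
  have Neq: "real DIM('a) + e * q < 0" using qN unfolding e_def N_def by (simp add: algebra_simps)
  have u_eq: "u x = cc * h * enn2real (Phi R e x)" for x
    unfolding u_def cc_def e_def N_def by (rule conv_sigma_eq)
  have Jfin: "Jb e r TYPE('a) < \<infinity>" if "r > 0" for r
    using Jb_finite[OF that Ne e0] .
  have Phifin: "Phi R e x < \<infinity>" for x :: 'a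
    using Phi_upper[of R e x] Jfin[of "norm x + R"] R by (simp add: le_less_trans add_nonneg_pos)
  define B1 where "B1 = enn2real (Jb e (3*R) TYPE('a))"
  define om where "om = unit_ball_vol DIM('a) * R ^ DIM('a)"
  have om: "om \<ge> 0" unfolding om_def using R by simp
  define g where "g = (\<lambda>x::'a. (cc * h * B1) powr q * indicator (ball 0 (2*R)) x
      + (cc * h * om) powr q * 2 powr (- (e * q)) * (indicator {x. 2*R \<le> norm x} x * norm x powr (e * q)))"
  have u_nonneg: "0 \<le> u x" for x using cc h by (simp add: u_eq)
  have bound: "u x powr q \<le> g x" for x
  proof (cases "norm x < 2*R")
    case True
    have "Phi R e x \<le> Jb e (3*R) TYPE('a)"
      using Phi_upper[of R e x] Jb_mono[of "norm x + R" "3*R" e, where 'a='a] True by simp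
    then have "enn2real (Phi R e x) \<le> B1" unfolding B1_def using Jfin[of "3*R"] R
      by (intro enn2real_mono) auto
    then have "u x \<le> cc * h * B1" unfolding u_eq using cc h by (intro mult_left_mono) auto
    then have "u x powr q \<le> (cc * h * B1) powr q" using u_nonneg q by (intro powr_mono2) auto
    then show ?thesis using True unfolding g_def by (simp add: dist_norm)
  next
    case False
    then have x: "2*R \<le> norm x" by simp
    have "Phi R e x \<le> ennreal ((norm x / 2) powr e * om)"
      using Phi_far[OF e0 R x] unfolding om_def .
    then have "enn2real (Phi R e x) \<le> (norm x / 2) powr e * om"
      using om by (intro enn2real_leI) auto
    then have "u x \<le> cc * h * ((norm x / 2) powr e * om)" unfolding u_eq using cc h by (intro mult_left_mono) auto
    then have "u x powr q \<le> ((cc * h * om) * (norm x / 2) powr e) powr q"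
      using u_nonneg q by (intro powr_mono2) (auto simp: ac_simps)
    also have "\<dots> = (cc * h * om) powr q * 2 powr (- (e * q)) * norm x powr (e * q)"
      using x R cc h om q by (intro powr_far_bound) auto
    finally show ?thesis using x R unfolding g_def by (simp add: dist_norm)
  qed
  have meas_u: "(\<lambda>x. u x powr q) \<in> borel_measurable lborel"
    unfolding u_eq by measurable
  have int1: "integrable lborel (indicator (ball 0 (2*R)) :: 'a \<Rightarrow> real)"
    by (rule integrable_real_indicator) (use emeasure_lborel_ball_finite[of "0::'a" "2*R"] in auto)
  have int2: "integrable lborel (\<lambda>x::'a. indicator {x. 2*R \<le> norm x} x * norm x powr (e * q))"
  proof (rule integrableI_nonneg)
    show "(\<lambda>x::'a. indicator {x. 2*R \<le> norm x} x * norm x powr (e * q)) \<in> borel_measurable lborel"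
      by measurable
    show "AE x in lborel. 0 \<le> indicator {x::'a. 2*R \<le> norm x} x * norm x powr (e * q)" by simp
    have "(\<integral>\<^sup>+x. ennreal (indicator {x::'a. 2*R \<le> norm x} x * norm x powr (e * q)) \<partial>lborel)
       = (\<integral>\<^sup>+x. indicator {x::'a. 2*R \<le> norm x} x * ennreal (norm x powr (e * q)) \<partial>lborel)"
      by (intro nn_integral_cong) (simp add: indicator_def)
    also have "\<dots> = Pann (e*q) TYPE('a) * ennreal ((2*R) powr (real DIM('a) + e*q) / (1 - 2 powr (real DIM('a) + e*q)))"
      using R Neq by (intro ext_integral) auto
    also have "\<dots> < \<infinity>"
    proof -
      have "e * q \<le> 0" using e0 q by (simp add: mult_nonpos_nonneg)
      from Pann_bounds(1)[OF this, where 'a='a] have "Pann (e*q) TYPE('a) < \<infinity>"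
        by (simp add: le_less_trans)
      then show ?thesis by (simp add: ennreal_mult_less_top)
    qed
    finally show "(\<integral>\<^sup>+x. ennreal (indicator {x::'a. 2*R \<le> norm x} x * norm x powr (e * q)) \<partial>lborel) < \<infinity>" .
  qed
  have intg: "integrable lborel g"
    unfolding g_def using int1 int2 by (intro Bochner_Integration.integrable_add Bochner_Integration.integrable_mult_right) auto
  have intu: "integrable lborel (\<lambda>x. u x powr q)"
  proof (rule Bochner_Integration.integrable_bound[OF intg meas_u])
    show "AE x in lborel. norm (u x powr q) \<le> norm (g x)"
    proof (intro AE_I2)
      fix x
      have "norm (u x powr q) = u x powr q" by simp
      also have "\<dots> \<le> g x" by (rule bound)
      also have "g x \<le> norm (g x)" by simp
      finally show "norm (u x powr q) \<le> norm (g x)" .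
    qed
  qed
  show "integrable lebesgue (\<lambda>x. u x powr q)"
    using intu meas_u by (subst integrable_completion) auto
  define lam where "lam = 2 powr e * vA TYPE('a) * ((R/2) powr s / (2 powr s - 1))"
  have lam: "lam \<ge> 0"
  proof -
    have "2 powr 0 < 2 powr s" using s by (intro powr_less_mono) auto
    then show ?thesis unfolding lam_def using vA_pos[where 'a='a] by simp
  qed
  have lowb: "(cc * h * lam) powr q * indicator (ball 0 (R/2)) x \<le> u x powr q" for x
  proof (cases "x \<in> ball 0 (R/2)")
    case True
    have "ennreal lam \<le> Jb e (R/2) TYPE('a)"
      using Jb_lower[OF _ Ne e0, of "R/2"] R unfolding lam_def e_def N_def by simp
    also have "\<dots> \<le> Phi R e x" using True by (intro Phi_lower) (simp add: dist_norm)
    finally have "enn2real (ennreal lam) \<le> enn2real (Phi R e x)"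
      by (rule enn2real_mono) (use Phifin[of x] in auto)
    then have "lam \<le> enn2real (Phi R e x)" using lam by simp
    then have "cc * h * lam \<le> u x" unfolding u_eq using cc h by (intro mult_left_mono) auto
    then have "(cc * h * lam) powr q \<le> u x powr q" using cc h lam q by (intro powr_mono2) auto
    then show ?thesis using True by simp
  qed (simp add: u_nonneg)
  have "(\<integral>x. (cc * h * lam) powr q * indicator (ball (0::'a) (R/2)) x \<partial>lborel) \<le> (\<integral>x. u x powr q \<partial>lborel)"
  proof (rule Bochner_Integration.integral_mono[OF _ intu])
    show "integrable lborel (\<lambda>x::'a. (cc * h * lam) powr q * indicator (ball 0 (R/2)) x)"
      by (intro Bochner_Integration.integrable_mult_right integrable_real_indicator) (use emeasure_lborel_ball_finite[of "0::'a" "R/2"] in auto)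
  qed (rule lowb)
  also have "(\<integral>x. u x powr q \<partial>lborel) = (\<integral>x. u x powr q \<partial>lebesgue)"
    using meas_u by (rule integral_completion[symmetric])
  also have "(\<integral>x. (cc * h * lam) powr q * indicator (ball (0::'a) (R/2)) x \<partial>lborel)
     = (cc * h * lam) powr q * (unit_ball_vol DIM('a) * (R/2) ^ DIM('a))"
  proof -
    have "measure lborel (ball (0::'a) (R/2)) = unit_ball_vol DIM('a) * (R/2) ^ DIM('a)"
      using content_ball[of "R/2" "0::'a"] R by simp
    then show ?thesis by simp
  qed
  finally show "(riesz_const (real DIM('a)) (s/2) * h * (2 powr (s - real DIM('a)) * vA TYPE('a) * ((R/2) powr s / (2 powr s - 1)))) powr q
           * (unit_ball_vol DIM('a) * (R/2) ^ DIM('a)) \<le> (\<integral>x. u x powr q \<partial>lebesgue)"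
    unfolding cc_def lam_def e_def N_def .
qed

lemma ball_measure_lborel:
  "R \<ge> 0 \<Longrightarrow> measure lborel (ball (0::'a::euclidean_space) R) = unit_ball_vol DIM('a) * R ^ DIM('a)"
  using content_ball[of R "0::'a"] by simp

lemma int_ind_ball:
  "integrable lborel (indicator (ball (0::'a::euclidean_space) R) :: 'a \<Rightarrow> real)"
  by (rule integrable_real_indicator) (use emeasure_lborel_ball_finite[of "0::'a" R] in auto)

lemma sigma_admissible:
  fixes h R m :: real
  assumes h: "h > 0" and R: "R > 0" and m: "m > 0"
  defines "\<sigma> \<equiv> (\<lambda>x::'a::euclidean_space. h * indicator (ball 0 R) x)"
  shows "\<sigma> \<in> admissible m (h * (unit_ball_vol DIM('a) * R ^ DIM('a)))"
    and "(\<integral>x. \<sigma> x powr m \<partial>lebesgue) = h powr m * (unit_ball_vol DIM('a) * R ^ DIM('a))"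
proof -
  have ms[measurable]: "\<sigma> \<in> borel_measurable lborel" unfolding \<sigma>_def by measurable
  have i1: "integrable lborel \<sigma>" unfolding \<sigma>_def
    by (intro Bochner_Integration.integrable_mult_right int_ind_ball)
  have pw: "(\<lambda>x. \<sigma> x powr m) = (\<lambda>x. h powr m * indicator (ball (0::'a) R) x)"
    unfolding \<sigma>_def using h by (auto simp: indicator_def fun_eq_iff)
  have i2: "integrable lborel (\<lambda>x. \<sigma> x powr m)" unfolding pw
    by (intro Bochner_Integration.integrable_mult_right int_ind_ball)
  have m2[measurable]: "(\<lambda>x. \<sigma> x powr m) \<in> borel_measurable lborel" unfolding pw by measurable
  have m3[measurable]: "(\<lambda>x. \<sigma> x *\<^sub>R x) \<in> borel_measurable lborel" by measurable
  have i3: "integrable lborel (\<lambda>x. \<sigma> x *\<^sub>R x)"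
  proof (rule Bochner_Integration.integrable_bound[OF _ m3])
    show "integrable lborel (\<lambda>x. (h * R) * indicator (ball (0::'a) R) x)"
      by (intro Bochner_Integration.integrable_mult_right int_ind_ball)
    show "AE x in lborel. norm (\<sigma> x *\<^sub>R x) \<le> norm ((h * R) * indicator (ball (0::'a) R) x)"
    proof (intro AE_I2)
      fix x :: 'a
      show "norm (\<sigma> x *\<^sub>R x) \<le> norm ((h * R) * indicator (ball (0::'a) R) x)"
        unfolding \<sigma>_def using h R
        by (cases "x \<in> ball 0 R") (auto simp: dist_norm abs_mult intro!: mult_left_mono)
    qed
  qed
  have mass: "(\<integral>x. \<sigma> x \<partial>lebesgue) = h * (unit_ball_vol DIM('a) * R ^ DIM('a))"
  proof -
    have "(\<integral>x. \<sigma> x \<partial>lebesgue) = (\<integral>x. \<sigma> x \<partial>lborel)" by (rule integral_completion) measurable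
    also have "\<dots> = h * measure lborel (ball (0::'a) R)" unfolding \<sigma>_def by simp
    finally show ?thesis using R by (simp add: ball_measure_lborel)
  qed
  show pm: "(\<integral>x. \<sigma> x powr m \<partial>lebesgue) = h powr m * (unit_ball_vol DIM('a) * R ^ DIM('a))"
  proof -
    have "(\<integral>x. \<sigma> x powr m \<partial>lebesgue) = (\<integral>x. \<sigma> x powr m \<partial>lborel)" by (rule integral_completion) measurable
    also have "\<dots> = h powr m * measure lborel (ball (0::'a) R)" unfolding pw by simp
    finally show ?thesis using R by (simp add: ball_measure_lborel)
  qed
  have mom: "(\<integral>x. \<sigma> x *\<^sub>R x \<partial>lebesgue) = 0"
  proof -
    let ?I = "(\<integral>x. \<sigma> x *\<^sub>R x \<partial>lebesgue)"
    have sym: "\<sigma> (- x) = \<sigma> x" for x unfolding \<sigma>_def by (simp add: indicator_def)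
    have "?I = (\<bar>-1::real\<bar> ^ DIM('a)) *\<^sub>R (\<integral>x. \<sigma> ((-1) *\<^sub>R x) *\<^sub>R ((-1) *\<^sub>R x) \<partial>lebesgue)"
      by (rule lebesgue_scale_integral(1)[of "-1" "\<lambda>x. \<sigma> x *\<^sub>R x"]) simp
    also have "\<dots> = (\<integral>x. - (\<sigma> x *\<^sub>R x) \<partial>lebesgue)" by (simp add: sym)
    also have "\<dots> = - ?I" by (rule Bochner_Integration.integral_minus)
    finally have "?I + ?I = 0" by (simp add: eq_neg_iff_add_eq_0)
    then have "(2::real) *\<^sub>R ?I = 0" by (simp add: scaleR_2)
    then show ?thesis by simp
  qed
  show "\<sigma> \<in> admissible m (h * (unit_ball_vol DIM('a) * R ^ DIM('a)))"
    unfolding admissible_def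
    using i1 i2 i3 ms m2 m3 mass mom h
    by (auto simp: \<sigma>_def integrable_completion)
qed

lemma two_powr_bound:
  fixes s :: real
  assumes "s > 0"
  shows "1 / (2 * ln 2 * 2 powr s) \<le> (s/2) / (2 powr s - 1)"
proof -
  define t where "t = s * ln 2"
  have t: "t > 0" unfolding t_def using assms by simp
  have e: "2 powr s = exp t" unfolding t_def by (simp add: powr_def)
  have "1 + (-t) \<le> exp (-t)" by (rule exp_ge_add_one_self)
  then have "exp t * (1 - t) \<le> exp t * exp (-t)" by (intro mult_left_mono) auto
  then have "exp t - 1 \<le> t * exp t" by (simp add: exp_minus field_simps)
  moreover have "exp t - 1 > 0" using t by simp
  ultimately have "1 / (2 * ln 2 * exp t) \<le> (s/2) / (exp t - 1)"
    using t unfolding t_def by (simp add: field_simps)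
  then show ?thesis by (simp add: e)
qed

lemma div_div_aux:
  fixes x g k d :: real
  assumes "g \<noteq> 0" "k \<noteq> 0"
  shows "x / (g / k) / d = x / g * (k / d)"
  using assms by (cases "d = 0") (simp_all add: field_simps)

lemma riesz_const_pos:
  assumes "0 < s" "s < N"
  shows "riesz_const N (s/2) > 0"
  unfolding riesz_const_def using assms by (auto intro!: mult_pos_pos divide_pos_pos Gamma_real_pos)

lemma kappa_lower:
  fixes s N V :: real
  assumes s: "0 < s" "s < N" and V: "V > 0"
  shows "pi powr (-N/2) * 2 powr (-N) * V * Gamma (N/2 - s/2) / (2 * ln 2 * 2 powr s * Gamma (s/2+1))
     \<le> riesz_const N (s/2) * 2 powr (s - N) * V / (2 powr s - 1)"
proof -
  define Bk where "Bk = pi powr (-N/2) * 2 powr (-N) * V * Gamma (N/2 - s/2) / Gamma (s/2+1)"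
  have Bk: "Bk \<ge> 0" unfolding Bk_def using s V by (auto intro!: mult_nonneg_nonneg divide_nonneg_nonneg less_imp_le[OF Gamma_real_pos])
  have G0: "Gamma (s/2 + 1) = (s/2) * Gamma (s/2)"
    by (rule Gamma_plus1) (use s in \<open>auto simp: nonpos_Ints_def\<close>)
  then have G: "Gamma (s/2) = Gamma (s/2 + 1) / (s/2)" using s by simp
  have Gp: "Gamma (s/2) > 0" "Gamma (s/2+1) > 0" using s by (auto intro!: Gamma_real_pos)
  have p2: "2 powr (-s) * 2 powr (s - N) = 2 powr (-N)" by (simp add: powr_add[symmetric])
  have "riesz_const N (s/2) * 2 powr (s - N) * V / (2 powr s - 1)
      = pi powr (-N/2) * (2 powr (-s) * 2 powr (s - N)) * V * Gamma (N/2 - s/2) / Gamma (s/2) / (2 powr s - 1)"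
    unfolding riesz_const_def by (simp add: field_simps)
  also have "\<dots> = Bk * ((s/2) / (2 powr s - 1))"
    unfolding Bk_def p2 G using Gp s by (simp add: div_div_aux)
  finally have k: "riesz_const N (s/2) * 2 powr (s - N) * V / (2 powr s - 1) = Bk * ((s/2) / (2 powr s - 1))" .
  have "pi powr (-N/2) * 2 powr (-N) * V * Gamma (N/2 - s/2) / (2 * ln 2 * 2 powr s * Gamma (s/2+1))
      = Bk * (1 / (2 * ln 2 * 2 powr s))"
    unfolding Bk_def using Gp by (simp add: field_simps)
  also have "\<dots> \<le> Bk * ((s/2) / (2 powr s - 1))"
    using two_powr_bound[OF s(1)] Bk by (rule mult_left_mono)
  finally show ?thesis using k by simp
qed

lemma alg_aux1:
  fixes c h P V Q D :: real
  shows "c * h * (P * V * (Q / D)) = h * (c * P * V / D) * Q"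
  by (simp add: divide_inverse mult_ac)

lemma alg_aux2:
  fixes M a b c h :: real
  assumes "h \<noteq> 0"
  shows "M * a * (b * c) = (h * a) * b * (M / h * c)"
  using assms by (simp add: field_simps)

lemma part1:
  fixes p m chi M :: real
  assumes p: "1 < p" and m: "conj_exp p < m" and chi: "0 < chi" and M: "0 < M"
  shows "\<exists>c0>0. eventually (\<lambda>s. \<exists>\<sigma>::'a::euclidean_space \<Rightarrow> real. \<sigma> \<in> admissible m M \<and> free_energy m chi s p \<sigma> \<le> -c0) (at_right 0)"
proof -
  define N where "N = real DIM('a)"
  have N1: "N \<ge> 1" unfolding N_def using DIM_positive[where 'a='a] by linarith
  define q where "q = conj_exp p"
  have q1: "q > 1" unfolding q_def conj_exp_def using p by (simp add: field_simps)
  have mq: "m > q" using m unfolding q_def .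
  have m1: "m > 1" using mq q1 by simp
  define V where "V = vA TYPE('a)"
  have V: "V > 0" unfolding V_def by (rule vA_pos)
  define L where "L = pi powr (-N/2) * 2 powr (-N) * V * Gamma (N/2) / (2 * ln 2)"
  have L: "L > 0" unfolding L_def using V N1 by (auto intro!: mult_pos_pos divide_pos_pos Gamma_real_pos)
  define E where "E = (\<lambda>s. pi powr (-N/2) * 2 powr (-N) * V * Gamma (N/2 - s/2) / (2 * ln 2 * 2 powr s * Gamma (s/2+1)))"
  have "isCont E 0"
    unfolding E_def using N1 by (intro continuous_intros isCont_Gamma) (auto simp: nonpos_Ints_def)
  moreover have "E 0 = L" unfolding E_def L_def by simp
  ultimately have "(E \<longlongrightarrow> L) (at 0)" by (simp add: isCont_def)
  then have Elim: "(E \<longlongrightarrow> L) (at_right 0)" by (rule tendsto_within_subset) auto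
  define k0 where "k0 = L / 2"
  have k0: "k0 > 0" "k0 < L" unfolding k0_def using L by auto
  define A0 where "A0 = chi / q * (k0/2) powr q * 2 powr (-N)"
  have A0: "A0 > 0" unfolding A0_def using chi q1 k0 by auto
  define X where "X = A0 * (m - 1) / 2"
  have X: "X > 0" unfolding X_def using A0 m1 by auto
  define h where "h = min 1 (X powr (1/(m-q)))"
  have h: "h > 0" "h \<le> 1" unfolding h_def using X by auto
  have hX: "h powr (m - q) \<le> X"
  proof -
    have "h powr (m - q) \<le> (X powr (1/(m-q))) powr (m - q)"
      using h mq unfolding h_def by (intro powr_mono2) auto
    also have "\<dots> = X" using mq X by (simp add: powr_powr)
    finally show ?thesis .
  qed
  define om where "om = unit_ball_vol DIM('a)"
  have om: "om > 0" unfolding om_def by simp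
  define R where "R = (M / (h * om)) powr (1/N)"
  have R: "R > 0" unfolding R_def using M h om by simp
  have RN: "om * R ^ DIM('a) = M / h"
  proof -
    have "R ^ DIM('a) = R powr N" using R unfolding N_def by (simp add: powr_realpow)
    also have "\<dots> = M / (h * om)" unfolding R_def using M h om N1 by (simp add: powr_powr)
    finally show ?thesis using om by simp
  qed
  define c0 where "c0 = M * A0 * h powr (q - 1) / 2"
  have c0: "c0 > 0" unfolding c0_def using M A0 h by simp
  have Np: "0 < N / p" using N1 p by simp
  have ev1: "eventually (\<lambda>s. 0 < s) (at_right (0::real))" by (simp add: eventually_at_right_less)
  have ev2: "eventually (\<lambda>s. s < N / p) (at_right (0::real))"
    by (rule order_tendstoD(2)[OF _ Np]) (rule tendsto_ident_at)
  have ev3: "eventually (\<lambda>s. k0 < E s) (at_right 0)" by (rule order_tendstoD(1)[OF Elim k0(2)])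
  have "isCont (\<lambda>s. (R/2) powr s) 0" using R by (intro continuous_intros) auto
  then have "((\<lambda>s. (R/2) powr s) \<longlongrightarrow> 1) (at 0)" using R by (simp add: isCont_def)
  then have "((\<lambda>s. (R/2) powr s) \<longlongrightarrow> 1) (at_right 0)" by (rule tendsto_within_subset) auto
  then have ev4: "eventually (\<lambda>s. 1/2 < (R/2) powr s) (at_right 0)" by (rule order_tendstoD(1)) simp
  have "eventually (\<lambda>s. \<exists>\<sigma>::'a \<Rightarrow> real. \<sigma> \<in> admissible m M \<and> free_energy m chi s p \<sigma> \<le> -c0) (at_right 0)"
    using ev1 ev2 ev3 ev4
  proof eventually_elim
    case (elim s)
    then have s: "0 < s" "s < N / p" and Es: "k0 < E s" and Rs: "1/2 < (R/2) powr s" by auto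
    have "N / p < N" using N1 p by (simp add: divide_less_eq)
    then have sN: "s < N" using s by linarith
    have qN: "(N - s) * q > N"
    proof -
      have "N / p = N - N / q" unfolding q_def conj_exp_def using p by (simp add: field_simps)
      then have "N / q < N - s" using s by simp
      then show ?thesis using q1 by (simp add: field_simps)
    qed
    define c where "c = riesz_const N (s/2)"
    have c: "c > 0" unfolding c_def using s sN by (intro riesz_const_pos) auto
    define kap where "kap = c * 2 powr (s - N) * V / (2 powr s - 1)"
    have "E s \<le> kap" unfolding E_def kap_def c_def by (rule kappa_lower[OF s(1) sN V])
    then have kap: "k0 \<le> kap" using Es by linarith
    define \<sigma> where "\<sigma> = (\<lambda>x::'a. h * indicator (ball 0 R) x)"
    have m0: "m > 0" using m1 by simp
    have adm: "\<sigma> \<in> admissible m (h * (unit_ball_vol DIM('a) * R ^ DIM('a)))"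
      unfolding \<sigma>_def by (rule sigma_admissible(1)[OF h(1) R m0])
    have pm: "(\<integral>x. \<sigma> x powr m \<partial>lebesgue) = h powr m * (unit_ball_vol DIM('a) * R ^ DIM('a))"
      unfolding \<sigma>_def by (rule sigma_admissible(2)[OF h(1) R m0])
    have mass: "h * (unit_ball_vol DIM('a) * R ^ DIM('a)) = M" using RN h unfolding om_def by simp
    have pot: "(c * h * (2 powr (s - N) * V * ((R/2) powr s / (2 powr s - 1)))) powr q
           * (unit_ball_vol DIM('a) * (R/2) ^ DIM('a)) \<le> (\<integral>x. conv (riesz_kernel N (s/2)) \<sigma> x powr q \<partial>lebesgue)"
      using sigma_potential(2)[OF s(1) sN[unfolded N_def] qN[unfolded N_def] q1 h(1) R c[unfolded c_def N_def]]
      unfolding \<sigma>_def c_def N_def V_def by simp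
    have eqk: "c * h * (2 powr (s - N) * V * ((R/2) powr s / (2 powr s - 1))) = h * kap * (R/2) powr s"
      unfolding kap_def by (rule alg_aux1)
    have lb1: "h * k0 / 2 \<le> h * kap * (R/2) powr s"
    proof -
      have "h * k0 / 2 = h * k0 * (1/2)" by simp
      also have "\<dots> \<le> h * kap * (R/2) powr s"
        using h k0 kap Rs by (intro mult_mono) auto
      finally show ?thesis .
    qed
    have lb2: "(h * k0 / 2) powr q \<le> (h * kap * (R/2) powr s) powr q"
      using lb1 h k0 q1 by (intro powr_mono2) auto
    have p2N: "(2::real) ^ DIM('a) = 2 powr N" unfolding N_def by (rule powr_realpow[symmetric]) simp
    have vol2: "unit_ball_vol DIM('a) * (R/2) ^ DIM('a) = M / h * 2 powr (-N)"
    proof -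
      have "unit_ball_vol DIM('a) * (R/2) ^ DIM('a) = (om * R ^ DIM('a)) / 2 ^ DIM('a)"
        unfolding om_def by (simp only: power_divide times_divide_eq_right)
      also have "\<dots> = (M / h) / 2 powr N" by (simp only: RN p2N)
      also have "\<dots> = M / h * 2 powr (-N)" by (simp add: powr_minus divide_inverse)
      finally show ?thesis .
    qed
    define I where "I = (\<integral>x. conv (riesz_kernel N (s/2)) \<sigma> x powr q \<partial>lebesgue)"
    have Ilow: "M * h powr (q - 1) * ((k0/2) powr q * 2 powr (-N)) \<le> I"
    proof -
      have e1: "(h * k0 / 2) powr q = h powr q * (k0/2) powr q"
      proof -
        have "(h * (k0 / 2)) powr q = h powr q * (k0/2) powr q" using powr_mult[of h "k0/2" q] h k0 by linarith
        then show ?thesis by simp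
      qed
      have e2: "h powr q = h * h powr (q - 1)"
      proof -
        have "h powr q = h powr (1 + (q - 1))" by simp
        also have "\<dots> = h powr 1 * h powr (q - 1)" by (rule powr_add)
        finally show ?thesis using h by simp
      qed
      have "M * h powr (q - 1) * ((k0/2) powr q * 2 powr (-N)) = (h * h powr (q - 1)) * (k0/2) powr q * (M / h * 2 powr (-N))"
        using h by (intro alg_aux2) auto
      also have "\<dots> = (h * k0 / 2) powr q * (M / h * 2 powr (-N))" by (simp only: e1 e2)
      also have "\<dots> \<le> (h * kap * (R/2) powr s) powr q * (M / h * 2 powr (-N))"
        using lb2 M h by (intro mult_right_mono) auto
      also have "\<dots> \<le> I" using pot unfolding I_def eqk vol2 .
      finally show ?thesis .
    qed
    have Fs: "free_energy m chi s p \<sigma> = 1 / (m - 1) * (M * h powr (m - 1)) - chi / q * I"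
    proof -
      have "h powr m * (unit_ball_vol DIM('a) * R ^ DIM('a)) = M * h powr (m - 1)"
        using mass h by (simp add: powr_diff field_simps)
      then show ?thesis unfolding free_energy_def I_def q_def N_def using pm by simp
    qed
    have hm: "h powr (m - 1) \<le> h powr (q - 1) * X"
    proof -
      have "h powr (m - 1) = h powr (q - 1) * h powr (m - q)" using h by (simp add: powr_add[symmetric])
      also have "\<dots> \<le> h powr (q - 1) * X" using hX h by (intro mult_left_mono) auto
      finally show ?thesis .
    qed
    have "free_energy m chi s p \<sigma> \<le> 1 / (m - 1) * (M * (h powr (q - 1) * X)) - chi / q * (M * h powr (q - 1) * ((k0/2) powr q * 2 powr (-N)))"
      unfolding Fs
    proof (rule diff_mono)
      show "1 / (m - 1) * (M * h powr (m - 1)) \<le> 1 / (m - 1) * (M * (h powr (q - 1) * X))"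
        using hm M m1 by (intro mult_left_mono) auto
      show "chi / q * (M * h powr (q - 1) * ((k0/2) powr q * 2 powr (-N))) \<le> chi / q * I"
        using Ilow chi q1 by (intro mult_left_mono) auto
    qed
    also have "\<dots> = - c0"
      unfolding c0_def X_def A0_def using m1 q1 by (simp add: field_simps)
    finally show ?case using adm mass by auto
  qed
  then show ?thesis using c0 by blast
qed

lemma scale_int_real:
  fixes f :: "'a::euclidean_space \<Rightarrow> real"
  assumes lam: "lam > 0"
  shows "(\<integral>x. f (lam *\<^sub>R x) \<partial>lebesgue) = (\<integral>x. f x \<partial>lebesgue) * lam powr (- real DIM('a))"
proof -
  have "(\<integral>x. f x \<partial>lebesgue) = lam ^ DIM('a) * (\<integral>x. f (lam *\<^sub>R x) \<partial>lebesgue)"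
    using lebesgue_scale_integral(1)[of lam f] lam by simp
  moreover have "lam ^ DIM('a) = lam powr (real DIM('a))" using lam by (simp add: powr_realpow)
  ultimately show ?thesis using lam by (simp add: powr_minus field_simps)
qed

lemma scale_int_vec:
  fixes f :: "'a::euclidean_space \<Rightarrow> 'a"
  assumes lam: "lam > 0"
  shows "(\<integral>x. f (lam *\<^sub>R x) \<partial>lebesgue) = (1 / lam ^ DIM('a)) *\<^sub>R (\<integral>x. f x \<partial>lebesgue)"
  using lebesgue_scale_integral(1)[of lam f] lam by simp

lemma conv_scale:
  fixes \<rho> :: "'a::euclidean_space \<Rightarrow> real"
  assumes lam: "lam > 0"
  shows "conv (riesz_kernel (real DIM('a)) (s/2)) (\<lambda>y. lam ^ DIM('a) * \<rho> (lam *\<^sub>R y)) x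
     = lam powr (real DIM('a) - s) * conv (riesz_kernel (real DIM('a)) (s/2)) \<rho> (lam *\<^sub>R x)"
proof -
  define K :: "'a \<Rightarrow> real" where "K = riesz_kernel (real DIM('a)) (s/2)"
  define g where "g = (\<lambda>u. K (x - (1/lam) *\<^sub>R u) * \<rho> u)"
  have "conv K (\<lambda>y. lam ^ DIM('a) * \<rho> (lam *\<^sub>R y)) x = (\<integral>y. lam ^ DIM('a) * g (lam *\<^sub>R y) \<partial>lebesgue)"
    unfolding conv_def g_def using lam by (simp add: ac_simps)
  also have "\<dots> = lam ^ DIM('a) * (\<integral>y. g (lam *\<^sub>R y) \<partial>lebesgue)" by simp
  also have "(\<integral>y. g (lam *\<^sub>R y) \<partial>lebesgue) = (\<integral>y. g y \<partial>lebesgue) * lam powr (- real DIM('a))"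
    by (rule scale_int_real[OF lam])
  also have "lam ^ DIM('a) * ((\<integral>y. g y \<partial>lebesgue) * lam powr (- real DIM('a))) = (\<integral>y. g y \<partial>lebesgue)"
  proof -
    have "lam ^ DIM('a) = lam powr (real DIM('a))" using lam by (simp add: powr_realpow)
    then show ?thesis using lam by (simp add: powr_minus field_simps)
  qed
  also have "(\<integral>y. g y \<partial>lebesgue) = (\<integral>u. lam powr (real DIM('a) - s) * (K (lam *\<^sub>R x - u) * \<rho> u) \<partial>lebesgue)"
  proof (rule Bochner_Integration.integral_cong[OF refl])
    fix u
    have n: "norm (x - (1/lam) *\<^sub>R u) = norm (lam *\<^sub>R x - u) / lam"
    proof -
      have "x - (1/lam) *\<^sub>R u = (1/lam) *\<^sub>R (lam *\<^sub>R x - u)" using lam by (simp add: algebra_simps)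
      then show ?thesis using lam by simp
    qed
    have "K (x - (1/lam) *\<^sub>R u) = lam powr (real DIM('a) - s) * K (lam *\<^sub>R x - u)"
    proof -
      have "norm (x - (1/lam) *\<^sub>R u) powr (s - real DIM('a))
          = norm (lam *\<^sub>R x - u) powr (s - real DIM('a)) / lam powr (s - real DIM('a))"
        unfolding n using lam by (simp add: powr_divide)
      also have "\<dots> = lam powr (real DIM('a) - s) * norm (lam *\<^sub>R x - u) powr (s - real DIM('a))"
      proof -
        have "lam powr (s - real DIM('a)) * lam powr (real DIM('a) - s) = 1"
          using lam by (simp add: powr_add[symmetric])
        then show ?thesis using lam by (simp add: field_simps)
      qed
      finally show ?thesis unfolding K_def riesz_kernel_def by (simp add: ac_simps)
    qed
    then show "g u = lam powr (real DIM('a) - s) * (K (lam *\<^sub>R x - u) * \<rho> u)"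
      unfolding g_def by simp
  qed
  also have "\<dots> = lam powr (real DIM('a) - s) * conv K \<rho> (lam *\<^sub>R x)"
    unfolding conv_def by simp
  finally show ?thesis unfolding K_def .
qed

lemma adm_scale:
  fixes \<rho> :: "'a::euclidean_space \<Rightarrow> real"
  assumes adm: "\<rho> \<in> admissible m M" and lam: "lam > 0" and m: "m > 0"
  shows "(\<lambda>x. lam ^ DIM('a) * \<rho> (lam *\<^sub>R x)) \<in> admissible m M"
proof -
  from adm have nn: "\<And>x. 0 \<le> \<rho> x" and i1: "integrable lebesgue \<rho>"
    and i2: "integrable lebesgue (\<lambda>x. \<rho> x powr m)" and ms: "(\<integral>x. \<rho> x \<partial>lebesgue) = M"
    and i3: "integrable lebesgue (\<lambda>x. \<rho> x *\<^sub>R x)" and mo: "(\<integral>x. \<rho> x *\<^sub>R x \<partial>lebesgue) = 0"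
    unfolding admissible_def by auto
  define n where "n = DIM('a)"
  have ln: "lam ^ n = lam powr real n" using lam by (simp add: powr_realpow)
  have j1: "integrable lebesgue (\<lambda>x. \<rho> (lam *\<^sub>R x))" using lebesgue_scale_integral(2)[of lam \<rho>] i1 lam by simp
  have j2: "integrable lebesgue (\<lambda>x. \<rho> (lam *\<^sub>R x) powr m)"
    using lebesgue_scale_integral(2)[of lam "\<lambda>x. \<rho> x powr m"] i2 lam by simp
  have j3: "integrable lebesgue (\<lambda>x. \<rho> (lam *\<^sub>R x) *\<^sub>R (lam *\<^sub>R x))"
    using lebesgue_scale_integral(2)[of lam "\<lambda>x. \<rho> x *\<^sub>R x"] i3 lam by simp
  have pw: "(lam ^ n * \<rho> (lam *\<^sub>R x)) powr m = (lam ^ n) powr m * \<rho> (lam *\<^sub>R x) powr m" for x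
    using nn lam by (simp add: powr_mult)
  have vec: "(lam ^ n * \<rho> (lam *\<^sub>R x)) *\<^sub>R x = (lam ^ n / lam) *\<^sub>R (\<rho> (lam *\<^sub>R x) *\<^sub>R (lam *\<^sub>R x))" for x
    using lam by (simp add: field_simps)
  have "(\<integral>x. lam ^ n * \<rho> (lam *\<^sub>R x) \<partial>lebesgue) = lam ^ n * (\<integral>x. \<rho> (lam *\<^sub>R x) \<partial>lebesgue)" by simp
  also have "\<dots> = lam ^ n * (M * lam powr (- real n))"
    using scale_int_real[OF lam, of \<rho>] ms unfolding n_def by simp
  also have "\<dots> = M" unfolding ln using lam by (simp add: powr_minus)
  finally have mass: "(\<integral>x. lam ^ n * \<rho> (lam *\<^sub>R x) \<partial>lebesgue) = M" .
  have "(\<integral>x. (lam ^ n * \<rho> (lam *\<^sub>R x)) *\<^sub>R x \<partial>lebesgue)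
      = (lam ^ n / lam) *\<^sub>R (\<integral>x. \<rho> (lam *\<^sub>R x) *\<^sub>R (lam *\<^sub>R x) \<partial>lebesgue)"
    unfolding vec by (rule Bochner_Integration.integral_scaleR_right)
  also have "(\<integral>x. \<rho> (lam *\<^sub>R x) *\<^sub>R (lam *\<^sub>R x) \<partial>lebesgue) = 0"
    using scale_int_vec[OF lam, of "\<lambda>x. \<rho> x *\<^sub>R x"] mo by simp
  finally have mom: "(\<integral>x. (lam ^ n * \<rho> (lam *\<^sub>R x)) *\<^sub>R x \<partial>lebesgue) = 0" by simp
  show ?thesis
    unfolding admissible_def n_def[symmetric]
  proof (intro CollectI conjI allI)
    show "0 \<le> lam ^ n * \<rho> (lam *\<^sub>R x)" for x using nn lam by simp
    show "integrable lebesgue (\<lambda>x. lam ^ n * \<rho> (lam *\<^sub>R x))"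
      using j1 by (rule Bochner_Integration.integrable_mult_right)
    show "integrable lebesgue (\<lambda>x. (lam ^ n * \<rho> (lam *\<^sub>R x)) powr m)"
      unfolding pw using j2 by (rule Bochner_Integration.integrable_mult_right)
    show "(\<integral>x. lam ^ n * \<rho> (lam *\<^sub>R x) \<partial>lebesgue) = M" by (rule mass)
    show "integrable lebesgue (\<lambda>x. (lam ^ n * \<rho> (lam *\<^sub>R x)) *\<^sub>R x)"
      unfolding vec using j3 by (rule Bochner_Integration.integrable_scaleR_right)
    show "(\<integral>x. (lam ^ n * \<rho> (lam *\<^sub>R x)) *\<^sub>R x \<partial>lebesgue) = 0" by (rule mom)
  qed
qed

lemma conv_nonneg:
  fixes \<rho> :: "'a::euclidean_space \<Rightarrow> real"
  assumes "\<And>x. 0 \<le> \<rho> x" and "0 < s" "s < real DIM('a)"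
  shows "0 \<le> conv (riesz_kernel (real DIM('a)) (s/2)) \<rho> x"
  unfolding conv_def riesz_kernel_def
  using assms riesz_const_pos[of s "real DIM('a)"]
  by (intro Bochner_Integration.integral_nonneg) auto

lemma energy_scale:
  fixes \<rho> :: "'a::euclidean_space \<Rightarrow> real"
  assumes nn: "\<And>x. 0 \<le> \<rho> x" and lam: "lam > 0" and m: "m > 0" and s: "0 < s" "s < real DIM('a)"
  shows "free_energy m chi s p (\<lambda>x. lam ^ DIM('a) * \<rho> (lam *\<^sub>R x))
    = lam powr (real DIM('a) * (m - 1)) * (1 / (m - 1) * (\<integral>x. \<rho> x powr m \<partial>lebesgue))
      - chi / conj_exp p * (lam powr ((real DIM('a) - s) * conj_exp p - real DIM('a))
          * (\<integral>x. conv (riesz_kernel (real DIM('a)) (s/2)) \<rho> x powr conj_exp p \<partial>lebesgue))"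
proof -
  define n where "n = DIM('a)"
  define N where "N = real n"
  define q where "q = conj_exp p"
  define v where "v = conv (riesz_kernel N (s/2)) \<rho>"
  have vn: "0 \<le> v x" for x unfolding v_def N_def n_def using conv_nonneg[OF nn s] .
  have ln: "lam ^ n = lam powr N" using lam unfolding N_def by (simp add: powr_realpow)
  have pw: "(lam ^ n * \<rho> (lam *\<^sub>R x)) powr m = lam powr (N * m) * \<rho> (lam *\<^sub>R x) powr m" for x
    using nn lam unfolding ln by (simp add: powr_mult powr_powr)
  have "(\<integral>x. (lam ^ n * \<rho> (lam *\<^sub>R x)) powr m \<partial>lebesgue)
      = lam powr (N * m) * (\<integral>x. \<rho> (lam *\<^sub>R x) powr m \<partial>lebesgue)" unfolding pw by simp
  also have "\<dots> = lam powr (N * m) * ((\<integral>x. \<rho> x powr m \<partial>lebesgue) * lam powr (- N))"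
    using scale_int_real[OF lam, of "\<lambda>x. \<rho> x powr m"] unfolding N_def n_def by simp
  also have "\<dots> = lam powr (N * (m - 1)) * (\<integral>x. \<rho> x powr m \<partial>lebesgue)"
  proof -
    have "lam powr (N * m) * lam powr (- N) = lam powr (N * (m - 1))"
      by (simp add: powr_add[symmetric] algebra_simps)
    then show ?thesis by (simp add: ac_simps)
  qed
  finally have A: "(\<integral>x. (lam ^ n * \<rho> (lam *\<^sub>R x)) powr m \<partial>lebesgue)
      = lam powr (N * (m - 1)) * (\<integral>x. \<rho> x powr m \<partial>lebesgue)" .
  have cv: "conv (riesz_kernel N (s/2)) (\<lambda>y. lam ^ n * \<rho> (lam *\<^sub>R y)) x powr q
       = lam powr ((N - s) * q) * v (lam *\<^sub>R x) powr q" for x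
  proof -
    have "conv (riesz_kernel N (s/2)) (\<lambda>y. lam ^ n * \<rho> (lam *\<^sub>R y)) x = lam powr (N - s) * v (lam *\<^sub>R x)"
      unfolding v_def N_def n_def by (rule conv_scale[OF lam])
    then show ?thesis using vn[of "lam *\<^sub>R x"] lam by (simp add: powr_mult powr_powr)
  qed
  have "(\<integral>x. conv (riesz_kernel N (s/2)) (\<lambda>y. lam ^ n * \<rho> (lam *\<^sub>R y)) x powr q \<partial>lebesgue)
      = lam powr ((N - s) * q) * (\<integral>x. v (lam *\<^sub>R x) powr q \<partial>lebesgue)" unfolding cv by simp
  also have "\<dots> = lam powr ((N - s) * q) * ((\<integral>x. v x powr q \<partial>lebesgue) * lam powr (- N))"
    using scale_int_real[OF lam, of "\<lambda>x. v x powr q"] unfolding N_def n_def by simp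
  also have "\<dots> = lam powr ((N - s) * q - N) * (\<integral>x. v x powr q \<partial>lebesgue)"
  proof -
    have "lam powr ((N - s) * q) * lam powr (- N) = lam powr ((N - s) * q - N)"
      by (simp add: powr_add[symmetric])
    then show ?thesis by (simp add: ac_simps)
  qed
  finally have B: "(\<integral>x. conv (riesz_kernel N (s/2)) (\<lambda>y. lam ^ n * \<rho> (lam *\<^sub>R y)) x powr q \<partial>lebesgue)
      = lam powr ((N - s) * q - N) * (\<integral>x. v x powr q \<partial>lebesgue)" .
  show ?thesis
    unfolding free_energy_def n_def[symmetric] N_def[symmetric] q_def[symmetric] A
    using B unfolding v_def by (simp add: ac_simps)
qed

lemma virial:
  fixes \<rho> :: "'a::euclidean_space \<Rightarrow> real"
  assumes adm: "\<rho> \<in> admissible m M"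
    and mini: "\<forall>\<sigma>::'a \<Rightarrow> real\<in>admissible m M. free_energy m chi s p \<rho> \<le> free_energy m chi s p \<sigma>"
    and s: "0 < s" "s < real DIM('a)" and m: "m > 1" and p: "p > 1"
  shows "real DIM('a) * (\<integral>x. \<rho> x powr m \<partial>lebesgue)
     = chi / conj_exp p * ((real DIM('a) - s) * conj_exp p - real DIM('a))
        * (\<integral>x. conv (riesz_kernel (real DIM('a)) (s/2)) \<rho> x powr conj_exp p \<partial>lebesgue)"
proof -
  define N where "N = real DIM('a)"
  define q where "q = conj_exp p"
  define A where "A = (\<integral>x. \<rho> x powr m \<partial>lebesgue)"
  define B where "B = (\<integral>x. conv (riesz_kernel N (s/2)) \<rho> x powr q \<partial>lebesgue)"
  define \<phi> where "\<phi> = (\<lambda>l::real. l powr (N * (m - 1)) * (1 / (m - 1) * A) - chi / q * (l powr ((N - s) * q - N) * B))"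
  have nn: "\<And>x. 0 \<le> \<rho> x" using adm unfolding admissible_def by auto
  have m0: "m > 0" using m by simp
  have phi_eq: "free_energy m chi s p (\<lambda>x. l ^ DIM('a) * \<rho> (l *\<^sub>R x)) = \<phi> l" if "l > 0" for l
    unfolding \<phi>_def A_def B_def N_def q_def using energy_scale[OF nn that m0 s] .
  have F1: "free_energy m chi s p \<rho> = \<phi> 1"
    using phi_eq[of 1] by simp
  have D: "(\<phi> has_real_derivative (N * (m - 1) * (1 / (m - 1) * A) - chi / q * (((N - s) * q - N) * B))) (at 1)"
  proof -
    have q0: "q \<noteq> 0" unfolding q_def conj_exp_def using p by simp
    show ?thesis unfolding \<phi>_def using q0 m by (auto intro!: derivative_eq_intros)
  qed
  have "N * (m - 1) * (1 / (m - 1) * A) - chi / q * (((N - s) * q - N) * B) = 0"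
  proof (rule DERIV_local_min[OF D, of 1])
    show "\<forall>y. \<bar>1 - y\<bar> < 1 \<longrightarrow> \<phi> 1 \<le> \<phi> y"
    proof (intro allI impI)
      fix y :: real
      assume "\<bar>1 - y\<bar> < 1"
      then have y: "y > 0" by simp
      have "\<phi> 1 = free_energy m chi s p \<rho>" using F1 by simp
      also have "\<dots> \<le> free_energy m chi s p (\<lambda>x. y ^ DIM('a) * \<rho> (y *\<^sub>R x))"
        using mini adm_scale[OF adm y m0] by blast
      also have "\<dots> = \<phi> y" by (rule phi_eq[OF y])
      finally show "\<phi> 1 \<le> \<phi> y" .
    qed
  qed simp
  moreover have "N * (m - 1) * (1 / (m - 1) * A) = N * A" using m by simp
  ultimately have "N * A = chi / q * ((N - s) * q - N) * B" by (simp add: mult.assoc)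
  then show ?thesis unfolding N_def q_def A_def B_def .
qed

theorem mainTheorem16:
  fixes \<rho> :: "real \<Rightarrow> 'a::euclidean_space \<Rightarrow> real" and p m chi M :: real
  assumes "1 < p" and "conj_exp p < m" and "0 < chi" and "0 < M"
    and "\<forall>s\<in>{0<..<real DIM('a) / p}. \<rho> s \<in> admissible m M \<and>
           (\<forall>\<sigma>::'a \<Rightarrow> real\<in>admissible m M. free_energy m chi s p (\<rho> s) \<le> free_energy m chi s p \<sigma>)"
  shows "Limsup (at_right 0) (\<lambda>s. ereal (free_energy m chi s p (\<rho> s))) < 0
       \<and> Limsup (at_right 0) (\<lambda>s. ereal ((sobolev_exp (real DIM('a)) s p - conj_exp m) / M
              * (\<integral>x. \<rho> s x powr m \<partial>lebesgue))) > 0"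
proof -
  note p = assms(1) and mq0 = assms(2) and chi = assms(3) and M = assms(4) and hyp = assms(5)
  define N where "N = real DIM('a)"
  have N1: "N \<ge> 1" unfolding N_def using DIM_positive[where 'a='a] by linarith
  define q where "q = conj_exp p"
  have q1: "q > 1" unfolding q_def conj_exp_def using p by (simp add: field_simps)
  have mq: "m > q" using mq0 unfolding q_def .
  have m1: "m > 1" using mq q1 by simp
  obtain c0 where c0: "c0 > 0" and ev0: "eventually (\<lambda>s. \<exists>\<sigma>::'a \<Rightarrow> real. \<sigma> \<in> admissible m M \<and> free_energy m chi s p \<sigma> \<le> -c0) (at_right 0)"
    using part1[where 'a='a, OF p mq0 chi M] by blast
  have Np: "0 < N / p" using N1 p by simp
  have evS1: "eventually (\<lambda>s. 0 < s) (at_right (0::real))" by (simp add: eventually_at_right_less)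
  have evS2: "eventually (\<lambda>s. s < N / p) (at_right (0::real))"
    by (rule order_tendstoD(2)[OF _ Np]) (rule tendsto_ident_at)
  have Nq: "0 < N * (q - 1) / (2 * q)" using N1 q1 by simp
  have evS3: "eventually (\<lambda>s. s < N * (q - 1) / (2 * q)) (at_right (0::real))"
    by (rule order_tendstoD(2)[OF _ Nq]) (rule tendsto_ident_at)
  have evF: "eventually (\<lambda>s. free_energy m chi s p (\<rho> s) \<le> -c0) (at_right 0)"
    using ev0 evS1 evS2
  proof eventually_elim
    case (elim s)
    then obtain \<sigma> :: "'a \<Rightarrow> real" where \<sigma>: "\<sigma> \<in> admissible m M" "free_energy m chi s p \<sigma> \<le> -c0" by auto
    have "s \<in> {0<..<real DIM('a) / p}" using elim unfolding N_def by auto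
    then have "free_energy m chi s p (\<rho> s) \<le> free_energy m chi s p \<sigma>" using hyp \<sigma>(1) by blast
    then show ?case using \<sigma>(2) by simp
  qed
  have part_i: "Limsup (at_right 0) (\<lambda>s. ereal (free_energy m chi s p (\<rho> s))) < 0"
  proof -
    have "Limsup (at_right 0) (\<lambda>s. ereal (free_energy m chi s p (\<rho> s))) \<le> ereal (-c0)"
      by (rule Limsup_bounded) (use evF in \<open>auto elim: eventually_mono\<close>)
    also have "ereal (-c0) < 0" using c0 by simp
    finally show ?thesis .
  qed
  define mc where "mc = conj_exp m"
  have mcp: "mc < p"
  proof -
    have "m * (p - 1) > p" using mq p unfolding q_def conj_exp_def by (simp add: field_simps)
    then show ?thesis unfolding mc_def conj_exp_def using m1 by (simp add: field_simps)
  qed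
  define a0 where "a0 = c0 * (q - 1) / 2"
  define d0 where "d0 = (p - mc) / M * a0"
  have d0: "d0 > 0" unfolding d0_def a0_def using mcp M c0 q1 by simp
  have evD: "eventually (\<lambda>s. d0 \<le> (sobolev_exp (real DIM('a)) s p - conj_exp m) / M
              * (\<integral>x. \<rho> s x powr m \<partial>lebesgue)) (at_right 0)"
    using evF evS1 evS2 evS3
  proof eventually_elim
    case (elim s)
    then have F: "free_energy m chi s p (\<rho> s) \<le> -c0" and s: "0 < s" "s < N / p"
      and s3: "s < N * (q - 1) / (2 * q)" by auto
    have "N / p < N" using N1 p by (simp add: divide_less_eq)
    then have sN: "s < N" using s by linarith
    have sin: "s \<in> {0<..<real DIM('a) / p}" using s unfolding N_def by auto
    have adm: "\<rho> s \<in> admissible m M" using hyp sin by blast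
    have mini: "\<forall>\<sigma>::'a \<Rightarrow> real\<in>admissible m M. free_energy m chi s p (\<rho> s) \<le> free_energy m chi s p \<sigma>"
      using hyp sin by blast
    define A where "A = (\<integral>x. \<rho> s x powr m \<partial>lebesgue)"
    define B where "B = (\<integral>x. conv (riesz_kernel N (s/2)) (\<rho> s) x powr q \<partial>lebesgue)"
    define \<beta> where "\<beta> = (N - s) * q - N"
    have A0: "A \<ge> 0" unfolding A_def by (intro Bochner_Integration.integral_nonneg) simp
    have vir: "N * A = chi / q * \<beta> * B"
      using virial[OF adm mini s(1) sN[unfolded N_def] m1 p] unfolding A_def B_def \<beta>_def N_def q_def .
    have Feq: "free_energy m chi s p (\<rho> s) = A / (m - 1) - chi / q * B"
      unfolding free_energy_def A_def B_def N_def q_def by simp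
    have beta_lb: "\<beta> \<ge> N * (q - 1) / 2"
    proof -
      have "s * q < N * (q - 1) / 2" using s3 q1 by (simp add: field_simps)
      then have h1: "2 * (s * q) < N * q - N" by (simp add: algebra_simps)
      have h2: "\<beta> = N * q - s * q - N" unfolding \<beta>_def by (simp add: algebra_simps)
      have h3: "N * (q - 1) / 2 = (N * q - N) / 2" by (simp add: algebra_simps)
      have lin: "\<And>a b c :: real. 2 * a < b - c \<Longrightarrow> (b - c) / 2 \<le> b - a - c" by (auto simp: field_simps)
      show ?thesis unfolding h2 h3 using lin[OF h1] .
    qed
    have "N * (q - 1) / 2 > 0" using N1 q1 by simp
    then have beta: "\<beta> > 0" using beta_lb by linarith
    have CB: "chi / q * B = N * A / \<beta>" using vir beta by (simp add: field_simps)
    have "A / (m - 1) - N * A / \<beta> \<le> -c0" using F Feq CB by simp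
    moreover have "A / (m - 1) \<ge> 0" using A0 m1 by simp
    ultimately have "c0 \<le> N * A / \<beta>" by linarith
    then have "c0 * \<beta> \<le> N * A" using beta by (simp add: field_simps)
    moreover have "c0 * (N * (q - 1) / 2) \<le> c0 * \<beta>" using beta_lb c0 by (intro mult_left_mono) auto
    ultimately have "N * (c0 * (q - 1) / 2) \<le> N * A" by (simp add: algebra_simps)
    then have Aa: "a0 \<le> A" unfolding a0_def using N1 by simp
    have ps: "p \<le> sobolev_exp (real DIM('a)) s p"
    proof -
      have pos: "0 < N - s * p" using s p by (simp add: field_simps)
      have "N - s * p \<le> N" using s p by simp
      then have "p * (N - s * p) \<le> N * p" using p by (simp add: mult_left_mono algebra_simps)
      then show ?thesis unfolding sobolev_exp_def N_def[symmetric] using pos by (simp add: field_simps)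
    qed
    have "d0 = (p - mc) / M * a0" by (simp add: d0_def)
    also have "\<dots> \<le> (sobolev_exp (real DIM('a)) s p - mc) / M * a0"
      using ps M c0 q1 unfolding a0_def by (intro mult_right_mono divide_right_mono) auto
    also have "\<dots> \<le> (sobolev_exp (real DIM('a)) s p - mc) / M * A"
      using Aa ps mcp M by (intro mult_left_mono) auto
    finally show ?case unfolding A_def mc_def .
  qed
  have part_ii: "Limsup (at_right 0) (\<lambda>s. ereal ((sobolev_exp (real DIM('a)) s p - conj_exp m) / M
              * (\<integral>x. \<rho> s x powr m \<partial>lebesgue))) > 0"
  proof -
    have "0 < ereal d0" using d0 by simp
    also have "ereal d0 \<le> Liminf (at_right 0) (\<lambda>s. ereal ((sobolev_exp (real DIM('a)) s p - conj_exp m) / M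
              * (\<integral>x. \<rho> s x powr m \<partial>lebesgue)))"
      by (rule Liminf_bounded) (use evD in \<open>auto elim: eventually_mono\<close>)
    also have "\<dots> \<le> Limsup (at_right 0) (\<lambda>s. ereal ((sobolev_exp (real DIM('a)) s p - conj_exp m) / M
              * (\<integral>x. \<rho> s x powr m \<partial>lebesgue)))"
      by (rule Liminf_le_Limsup) simp
    finally show ?thesis .
  qed
  show ?thesis using part_i part_ii by blast
qed


end
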